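(* Let $f\colon\prod_{i\in[n]}X_i\to Y$ satisfy condition (BC), let $\varphi_k\colon X_k\to Y$ ($k\in[n]$) be maps satisfying the boundary condition, and let $p\colon Y^n\to Y$ be a polynomial function. Put $a_k=\varphi_k(0_{X_k})$, $b_k=\varphi_k(1_{X_k})$, and define the polynomial functions $$p^-(\mathbf{y})=\bigvee_{I\subseteq[n]}\Big(c_I^-\wedge\bigwedge_{i\in I}y_i\Big),\quad c_I^-=\operatorname{cl}\Big(f(\widehat{\mathbf{1}}_I)\wedge\bigwedge_{i\notin I}\overline{a_i}\Big),$$ $$p^+(\mathbf{y})=\bigvee_{I\subseteq[n]}\Big(c_I^+\wedge\bigwedge_{i\in I}y_i\Big),\quad c_I^+=\operatorname{int}\Big(f(\widehat{\mathbf{1}}_I)\vee\bigvee_{i\in I}\overline{b_i}\Big).$$ Then $f(\mathbf{x})=p(\varphi_1(x_1),\ldots,\varphi_n(x_n))$ for all $\mathbf{x}\in\prod_{i\in[n]}X_i$ if and only if $\Phi_k^-\le\varphi_k\le\Phi_k^+$ for each $k\in[n]$ and $p^-\le p\le p^+$ (pointwise on $Y^n$).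
   Context: $Y$ is a finite distributive lattice identified with a sublattice of $\mathcal{P}(U)$ for a finite set $U$, with least element $0=\emptyset$, greatest element $1=U$, and $\wedge,\vee$ being intersection and union; $\overline{S}=U\setminus S$. For $S\subseteq U$, $\operatorname{cl}(S)=\bigwedge\{y\in Y: y\ge S\}$, $\operatorname{int}(S)=\bigvee\{y\in Y: y\le S\}$. Empty meets equal $U$ and empty joins equal $\emptyset$. $[n]=\{1,\ldots,n\}$; $X_1,\ldots,X_n$ are arbitrary sets with at least two elements, each with two fixed distinct elements $0_{X_k},1_{X_k}$ (written $0,1$). For $\mathbf{x}\in\prod_i X_i$ and $a\in X_k$, $\mathbf{x}_k^a$ is $\mathbf{x}$ with $k$-th component replaced by $a$. For $I\subseteq[n]$, $\widehat{\mathbf{1}}_I$ is the tuple whose $i$-th component is $1_{X_i}$ if $i\in I$ and $0_{X_i}$ otherwise. A map $\varphi_k\colon X_k\to Y$ satisfies the boundary condition if $\varphi_k(0_{X_k})\le\varphi_k(x_k)\le\varphi_k(1_{X_k})$ for all $x_k$. A polynomial function $Y^n\to Y$ is a composition of $\wedge,\vee$ with variables and constants. Condition (BC): $f(\mathbf{x}_k^0)\le f(\mathbf{x})\le f(\mathbf{x}_k^1)$ for all $k$ and $\mathbf{x}$. For $k\in[n]$, $a_k\in X_k$: $$\Phi_k^-(a_k)=\bigvee_{\mathbf{x}:\,x_k=a_k}\operatorname{cl}\big(f(\mathbf{x})\wedge\overline{f(\mathbf{x}_k^0)}\big),\qquad \Phi_k^+(a_k)=\bigwedge_{\mathbf{x}:\,x_k=a_k}\operatorname{int}\big(f(\mathbf{x})\vee\overline{f(\mathbf{x}_k^1)}\big),$$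 ranging over all $\mathbf{x}$ with $k$-th component $a_k$. *)

theory Defs
  imports "HOL-Library.FuncSet"
begin

definition set_lattice :: "'u set \<Rightarrow> 'u set set \<Rightarrow> bool" where
  "set_lattice U Y \<longleftrightarrow> finite U \<and> Y \<subseteq> Pow U \<and> {} \<in> Y \<and> U \<in> Y \<and>
     (\<forall>a\<in>Y. \<forall>b\<in>Y. a \<inter> b \<in> Y \<and> a \<union> b \<in> Y)"

definition cl :: "'u set set \<Rightarrow> 'u set \<Rightarrow> 'u set" where
  "cl Y S = \<Inter>{y\<in>Y. S \<subseteq> y}"

definition intr :: "'u set set \<Rightarrow> 'u set \<Rightarrow> 'u set" where
  "intr Y S = \<Union>{y\<in>Y. y \<subseteq> S}"

inductive_set lat_poly :: "'u set set \<Rightarrow> nat \<Rightarrow> ((nat \<Rightarrow> 'u set) \<Rightarrow> 'u set) set"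
  for Y :: "'u set set" and n :: nat where
  var: "i \<in> {1..n} \<Longrightarrow> (\<lambda>y. y i) \<in> lat_poly Y n"
| const: "c \<in> Y \<Longrightarrow> (\<lambda>y. c) \<in> lat_poly Y n"
| meet: "p \<in> lat_poly Y n \<Longrightarrow> q \<in> lat_poly Y n \<Longrightarrow> (\<lambda>y. p y \<inter> q y) \<in> lat_poly Y n"
| join: "p \<in> lat_poly Y n \<Longrightarrow> q \<in> lat_poly Y n \<Longrightarrow> (\<lambda>y. p y \<union> q y) \<in> lat_poly Y n"

definition is_polynomial :: "'u set set \<Rightarrow> nat \<Rightarrow> ((nat \<Rightarrow> 'u set) \<Rightarrow> 'u set) \<Rightarrow> bool" where
  "is_polynomial Y n p \<longleftrightarrow>
     (\<exists>q\<in>lat_poly Y n. \<forall>y\<in>PiE {1..n} (\<lambda>_. Y). p y = q y)"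

definition hat1 :: "nat \<Rightarrow> (nat \<Rightarrow> 'a) \<Rightarrow> (nat \<Rightarrow> 'a) \<Rightarrow> nat set \<Rightarrow> nat \<Rightarrow> 'a" where
  "hat1 n zero one I = (\<lambda>i. if i \<in> {1..n} then (if i \<in> I then one i else zero i) else undefined)"

text \<open>Phi_k^- (empty join = {}) and Phi_k^+ (empty meet = U).\<close>
definition Phi_minus where
  "Phi_minus U Y n X zero f k a =
     \<Union>{cl Y (f x \<inter> (U - f (x(k := zero k)))) | x. x \<in> PiE {1..n} X \<and> x k = a}"

definition Phi_plus where
  "Phi_plus U Y n X one f k a =
     U \<inter> \<Inter>{intr Y (f x \<union> (U - f (x(k := one k)))) | x. x \<in> PiE {1..n} X \<and> x k = a}"

definition c_minus where
  "c_minus U Y n zero one f a I =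
     cl Y (f (hat1 n zero one I) \<inter> (U \<inter> \<Inter>{U - a i | i. i \<in> {1..n} - I}))"

definition c_plus where
  "c_plus U Y n zero one f b I =
     intr Y (f (hat1 n zero one I) \<union> \<Union>{U - b i | i. i \<in> I})"

definition p_minus where
  "p_minus U Y n zero one f a y =
     \<Union>{c_minus U Y n zero one f a I \<inter> (U \<inter> \<Inter>{y i | i. i \<in> I}) | I. I \<subseteq> {1..n}}"

definition p_plus where
  "p_plus U Y n zero one f b y =
     \<Union>{c_plus U Y n zero one f b I \<inter> (U \<inter> \<Inter>{y i | i. i \<in> I}) | I. I \<subseteq> {1..n}}"

end

theory Submission
  imports Defs
begin

lemma lat_poly_mono:
  assumes "q \<in> lat_poly Y n"
  shows "(\<forall>i\<in>{1..n}. u \<in> y i \<longrightarrow> u \<in> z i) \<Longrightarrow> u \<in> q y \<Longrightarrow> u \<in> q z"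
  using assms by (induction q rule: lat_poly.induct) auto

lemma lat_poly_range:
  assumes "q \<in> lat_poly Y n" "set_lattice U Y" "y \<in> PiE {1..n} (\<lambda>_. Y)"
  shows "q y \<in> Y"
  using assms by (induction q rule: lat_poly.induct) (auto simp: set_lattice_def)

lemma poly_mono:
  assumes "is_polynomial Y n p" "y \<in> PiE {1..n} (\<lambda>_. Y)" "z \<in> PiE {1..n} (\<lambda>_. Y)"
    "\<forall>i\<in>{1..n}. u \<in> y i \<longrightarrow> u \<in> z i" "u \<in> p y"
  shows "u \<in> p z"
proof -
  obtain q where q: "q \<in> lat_poly Y n" "\<forall>y\<in>PiE {1..n} (\<lambda>_. Y). p y = q y"
    using assms(1) unfolding is_polynomial_def by blast
  show ?thesis using lat_poly_mono[OF q(1) assms(4)] assms q(2) by auto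
qed

lemma poly_range:
  assumes "is_polynomial Y n p" "set_lattice U Y" "y \<in> PiE {1..n} (\<lambda>_. Y)"
  shows "p y \<in> Y"
proof -
  obtain q where q: "q \<in> lat_poly Y n" "\<forall>y\<in>PiE {1..n} (\<lambda>_. Y). p y = q y"
    using assms(1) unfolding is_polynomial_def by blast
  show ?thesis using lat_poly_range[OF q(1) assms(2,3)] assms q(2) by auto
qed

lemma cl_least: "y \<in> Y \<Longrightarrow> S \<subseteq> y \<Longrightarrow> cl Y S \<subseteq> y"
  unfolding cl_def by auto

lemma cl_ext: "S \<subseteq> cl Y S"
  unfolding cl_def by auto

lemma intr_greatest: "y \<in> Y \<Longrightarrow> y \<subseteq> S \<Longrightarrow> y \<subseteq> intr Y S"
  unfolding intr_def by auto

lemma intr_sub: "intr Y S \<subseteq> S"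
  unfolding intr_def by auto

lemma override_PiE:
  assumes "z \<in> PiE A X" "K \<subseteq> A" "\<forall>k\<in>K. w k \<in> X k"
  shows "(\<lambda>i. if i \<in> K then w i else z i) \<in> PiE A X"
  using assms by (auto simp: PiE_def extensional_def Pi_def)

lemma step_chain_aux:
  assumes "finite K"
  shows "K \<subseteq> {1..n} \<Longrightarrow> \<forall>k\<in>K. w k \<in> X k \<Longrightarrow>
    (\<forall>k\<in>K. \<forall>z\<in>PiE {1..n} X. z k = xb k \<longrightarrow> P z \<longrightarrow> P (z(k := w k))) \<Longrightarrow>
    z \<in> PiE {1..n} X \<Longrightarrow> \<forall>k\<in>K. z k = xb k \<Longrightarrow> P z \<Longrightarrow> P (\<lambda>i. if i \<in> K then w i else z i)"
  using assms
proof (induction K rule: finite_induct)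
  case empty
  then show ?case by simp
next
  case (insert k K)
  let ?z = "\<lambda>i. if i \<in> K then w i else z i"
  have P1: "P ?z" using insert by auto
  have zin: "?z \<in> PiE {1..n} X" using insert override_PiE[of z "{1..n}" X K w] by auto
  have zk: "?z k = xb k" using insert by auto
  have st:  "\<forall>z\<in>PiE {1..n} X. z k = xb k \<longrightarrow> P z \<longrightarrow> P (z(k := w k))"
    using bspec[OF insert.prems(3) insertI1] .
  have "P (?z(k := w k))" using mp[OF mp[OF bspec[OF st zin] zk] P1] .
  moreover have "?z(k := w k) = (\<lambda>i. if i \<in> insert k K then w i else z i)" by auto
  ultimately show ?case by simp
qed

lemma step_chain:
  assumes "finite K" "K \<subseteq> {1..n}" "\<forall>k\<in>K. w k \<in> X k"
    and step: "\<And>k z. k \<in> K \<Longrightarrow> z \<in> PiE {1..n} X \<Longrightarrow> z k = xb k \<Longrightarrow> P z \<Longrightarrow> P (z(k := w k))"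
    and "z \<in> PiE {1..n} X" "\<forall>k\<in>K. z k = xb k" "P z"
  shows "P (\<lambda>i. if i \<in> K then w i else z i)"
proof -
  have "\<forall>k\<in>K. \<forall>z\<in>PiE {1..n} X. z k = xb k \<longrightarrow> P z \<longrightarrow> P (z(k := w k))"
    using step by blast
  then show ?thesis using step_chain_aux[OF assms(1,2,3)] assms(5,6,7) by blast
qed
theorem mainTheorem9:
  fixes U :: "'u set" and Y :: "'u set set" and n :: nat
    and X :: "nat \<Rightarrow> 'a set" and zero one :: "nat \<Rightarrow> 'a"
    and f :: "(nat \<Rightarrow> 'a) \<Rightarrow> 'u set"
    and \<phi> :: "nat \<Rightarrow> 'a \<Rightarrow> 'u set"
    and p :: "(nat \<Rightarrow> 'u set) \<Rightarrow> 'u set"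
  assumes Y: "set_lattice U Y"
    and X: "\<And>k. k \<in> {1..n} \<Longrightarrow> zero k \<in> X k \<and> one k \<in> X k \<and> zero k \<noteq> one k"
    and f_range: "\<And>x. x \<in> PiE {1..n} X \<Longrightarrow> f x \<in> Y"
    and BC: "\<And>k x. k \<in> {1..n} \<Longrightarrow> x \<in> PiE {1..n} X \<Longrightarrow>
               f (x(k := zero k)) \<subseteq> f x \<and> f x \<subseteq> f (x(k := one k))"
    and phi_range: "\<And>k t. k \<in> {1..n} \<Longrightarrow> t \<in> X k \<Longrightarrow> \<phi> k t \<in> Y"
    and phi_bound: "\<And>k t. k \<in> {1..n} \<Longrightarrow> t \<in> X k \<Longrightarrow>
               \<phi> k (zero k) \<subseteq> \<phi> k t \<and> \<phi> k t \<subseteq> \<phi> k (one k)"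
    and p_poly: "is_polynomial Y n p"
  shows "(\<forall>x\<in>PiE {1..n} X. f x = p (restrict (\<lambda>i. \<phi> i (x i)) {1..n}))
     \<longleftrightarrow>
     ((\<forall>k\<in>{1..n}. \<forall>t\<in>X k.
         Phi_minus U Y n X zero f k t \<subseteq> \<phi> k t \<and> \<phi> k t \<subseteq> Phi_plus U Y n X one f k t)
      \<and> (\<forall>y\<in>PiE {1..n} (\<lambda>_. Y).
         p_minus U Y n zero one f (\<lambda>i. \<phi> i (zero i)) y \<subseteq> p y
         \<and> p y \<subseteq> p_plus U Y n zero one f (\<lambda>i. \<phi> i (one i)) y))"
proof -
  have YU: "\<And>y. y \<in> Y \<Longrightarrow> y \<subseteq> U" using Y unfolding set_lattice_def by auto
  have UY: "U \<in> Y" and EY: "{} \<in> Y" using Y unfolding set_lattice_def by auto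
  have phx_in: "\<And>x. x \<in> PiE {1..n} X \<Longrightarrow> restrict (\<lambda>i. \<phi> i (x i)) {1..n} \<in> PiE {1..n} (\<lambda>_. Y)"
    using phi_range by (auto simp: PiE_def Pi_def)
  have upd_in: "\<And>x k t. x \<in> PiE {1..n} X \<Longrightarrow> k \<in> {1..n} \<Longrightarrow> t \<in> X k \<Longrightarrow> x(k := t) \<in> PiE {1..n} X"
    by (auto simp: PiE_def Pi_def extensional_def)
  have hat_in: "\<And>I. hat1 n zero one I \<in> PiE {1..n} X"
    using X by (auto simp: hat1_def PiE_def Pi_def extensional_def)
  define eh where "eh = (\<lambda>I. restrict (\<lambda>i. if i \<in> I then U else {}) {1..n})"
  have eh_in: "\<And>I. eh I \<in> PiE {1..n} (\<lambda>_. Y)" using UY EY by (auto simp: eh_def PiE_def Pi_def)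
  have phx_hat: "\<And>I i. i \<in> {1..n} \<Longrightarrow> restrict (\<lambda>i. \<phi> i (hat1 n zero one I i)) {1..n} i
      = (if i \<in> I then \<phi> i (one i) else \<phi> i (zero i))"
    by (auto simp: hat1_def)
  show ?thesis
  proof
    assume H: "\<forall>x\<in>PiE {1..n} X. f x = p (restrict (\<lambda>i. \<phi> i (x i)) {1..n})"
    have A: "Phi_minus U Y n X zero f k t \<subseteq> \<phi> k t \<and> \<phi> k t \<subseteq> Phi_plus U Y n X one f k t"
      if k: "k \<in> {1..n}" and t: "t \<in> X k" for k t
    proof
      show "Phi_minus U Y n X zero f k t \<subseteq> \<phi> k t"
        unfolding Phi_minus_def
      proof (rule Union_least)
        fix S assume "S \<in> {cl Y (f x \<inter> (U - f (x(k := zero k)))) | x. x \<in> PiE {1..n} X \<and> x k = t}"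
        then obtain x where x: "x \<in> PiE {1..n} X" "x k = t" and S: "S = cl Y (f x \<inter> (U - f (x(k := zero k))))"
          by blast
        have x0: "x(k := zero k) \<in> PiE {1..n} X" using upd_in x(1) k X by blast
        have "f x \<inter> (U - f (x(k := zero k))) \<subseteq> \<phi> k t"
        proof
          fix u assume u: "u \<in> f x \<inter> (U - f (x(k := zero k)))"
          show "u \<in> \<phi> k t"
          proof (rule ccontr)
            assume nu: "u \<notin> \<phi> k t"
            have "u \<in> p (restrict (\<lambda>i. \<phi> i (x i)) {1..n})" using u H x by auto
            then have "u \<in> p (restrict (\<lambda>i. \<phi> i ((x(k := zero k)) i)) {1..n})"
              by (rule poly_mono[OF p_poly phx_in[OF x(1)] phx_in[OF x0], rotated])
                 (use nu x in auto)
            then show False using u H x0 by auto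
          qed
        qed
        then show "S \<subseteq> \<phi> k t" unfolding S by (rule cl_least[OF phi_range[OF k t]])
      qed
      show "\<phi> k t \<subseteq> Phi_plus U Y n X one f k t"
        unfolding Phi_plus_def
      proof (intro Int_greatest Inter_greatest)
        show "\<phi> k t \<subseteq> U" using YU phi_range k t by blast
        fix S assume "S \<in> {intr Y (f x \<union> (U - f (x(k := one k)))) | x. x \<in> PiE {1..n} X \<and> x k = t}"
        then obtain x where x: "x \<in> PiE {1..n} X" "x k = t" and S: "S = intr Y (f x \<union> (U - f (x(k := one k))))"
          by blast
        have x1: "x(k := one k) \<in> PiE {1..n} X" using upd_in x(1) k X by blast
        have "\<phi> k t \<subseteq> f x \<union> (U - f (x(k := one k)))"
        proof
          fix u assume u: "u \<in> \<phi> k t"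
          show "u \<in> f x \<union> (U - f (x(k := one k)))"
          proof (cases "u \<in> f (x(k := one k))")
            case True
            then have "u \<in> p (restrict (\<lambda>i. \<phi> i ((x(k := one k)) i)) {1..n})" using H x1 by auto
            then have "u \<in> p (restrict (\<lambda>i. \<phi> i (x i)) {1..n})"
              by (rule poly_mono[OF p_poly phx_in[OF x1] phx_in[OF x(1)], rotated])
                 (use u x in auto)
            then show ?thesis using H x by auto
          next
            case False
            then show ?thesis using u YU phi_range k t by blast
          qed
        qed
        then show "\<phi> k t \<subseteq> S" unfolding S by (rule intr_greatest[OF phi_range[OF k t]])
      qed
    qed
    have B: "p_minus U Y n zero one f (\<lambda>i. \<phi> i (zero i)) y \<subseteq> p y
         \<and> p y \<subseteq> p_plus U Y n zero one f (\<lambda>i. \<phi> i (one i)) y"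
      if y: "y \<in> PiE {1..n} (\<lambda>_. Y)" for y
    proof
      show "p_minus U Y n zero one f (\<lambda>i. \<phi> i (zero i)) y \<subseteq> p y"
        unfolding p_minus_def
      proof (rule Union_least)
        fix S assume "S \<in> {c_minus U Y n zero one f (\<lambda>i. \<phi> i (zero i)) I \<inter> (U \<inter> \<Inter>{y i | i. i \<in> I}) | I. I \<subseteq> {1..n}}"
        then obtain I where I: "I \<subseteq> {1..n}" and S: "S = c_minus U Y n zero one f (\<lambda>i. \<phi> i (zero i)) I \<inter> (U \<inter> \<Inter>{y i | i. i \<in> I})"
          by blast
        have "f (hat1 n zero one I) \<inter> (U \<inter> \<Inter>{U - \<phi> i (zero i) | i. i \<in> {1..n} - I}) \<subseteq> p (eh I)"
        proof
          fix u assume u: "u \<in> f (hat1 n zero one I) \<inter> (U \<inter> \<Inter>{U - \<phi> i (zero i) | i. i \<in> {1..n} - I})"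
          then have "u \<in> p (restrict (\<lambda>i. \<phi> i (hat1 n zero one I i)) {1..n})" using H hat_in by auto
          then show "u \<in> p (eh I)"
          proof (rule poly_mono[OF p_poly phx_in[OF hat_in] eh_in, rotated])
            show "\<forall>i\<in>{1..n}. u \<in> restrict (\<lambda>i. \<phi> i (hat1 n zero one I i)) {1..n} i \<longrightarrow> u \<in> eh I i"
            proof (intro ballI impI)
              fix i assume i: "i \<in> {1..n}" and ui: "u \<in> restrict (\<lambda>i. \<phi> i (hat1 n zero one I i)) {1..n} i"
              show "u \<in> eh I i"
              proof (cases "i \<in> I")
                case True then show ?thesis using i u by (auto simp: eh_def)
              next
                case False
                then have "u \<notin> \<phi> i (zero i)" using u i by blast
                then show ?thesis using ui phx_hat[OF i, of I] False by simp
              qed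
            qed
          qed
        qed
        then have cm: "c_minus U Y n zero one f (\<lambda>i. \<phi> i (zero i)) I \<subseteq> p (eh I)"
          unfolding c_minus_def by (rule cl_least[OF poly_range[OF p_poly Y eh_in]])
        show "S \<subseteq> p y"
        proof
          fix u assume "u \<in> S"
          then have u: "u \<in> p (eh I)" "u \<in> U" "\<forall>i\<in>I. u \<in> y i" using S cm by auto
          show "u \<in> p y"
            by (rule poly_mono[OF p_poly eh_in y _ u(1)]) (use u I in \<open>auto simp: eh_def\<close>)
        qed
      qed
      show "p y \<subseteq> p_plus U Y n zero one f (\<lambda>i. \<phi> i (one i)) y"
      proof
        fix u assume u: "u \<in> p y"
        define I where "I = {i \<in> {1..n}. u \<in> y i}"
        have I: "I \<subseteq> {1..n}" unfolding I_def by auto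
        have uU: "u \<in> U" using u YU poly_range[OF p_poly Y y] by blast
        have ue: "u \<in> p (eh I)"
          by (rule poly_mono[OF p_poly y eh_in _ u]) (use uU in \<open>auto simp: eh_def I_def\<close>)
        have "p (eh I) \<subseteq> f (hat1 n zero one I) \<union> \<Union>{U - \<phi> i (one i) | i. i \<in> I}"
        proof
          fix w assume w: "w \<in> p (eh I)"
          have wU: "w \<in> U" using w YU poly_range[OF p_poly Y eh_in] by blast
          show "w \<in> f (hat1 n zero one I) \<union> \<Union>{U - \<phi> i (one i) | i. i \<in> I}"
          proof (cases "\<forall>i\<in>I. w \<in> \<phi> i (one i)")
            case True
            have "w \<in> p (restrict (\<lambda>i. \<phi> i (hat1 n zero one I i)) {1..n})"
            proof (rule poly_mono[OF p_poly eh_in phx_in[OF hat_in] _ w], intro ballI impI)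
              fix i assume i: "i \<in> {1..n}" and wi: "w \<in> eh I i"
              then have "i \<in> I" by (auto simp: eh_def split: if_splits)
              then show "w \<in> restrict (\<lambda>i. \<phi> i (hat1 n zero one I i)) {1..n} i"
                using phx_hat[OF i, of I] True by simp
            qed
            then show ?thesis using H hat_in by auto
          next
            case False
            then show ?thesis using wU by blast
          qed
        qed
        then have "p (eh I) \<subseteq> c_plus U Y n zero one f (\<lambda>i. \<phi> i (one i)) I"
          unfolding c_plus_def by (rule intr_greatest[OF poly_range[OF p_poly Y eh_in]])
        then have "u \<in> c_plus U Y n zero one f (\<lambda>i. \<phi> i (one i)) I \<inter> (U \<inter> \<Inter>{y i | i. i \<in> I})"
          using ue uU by (auto simp: I_def)
        then show "u \<in> p_plus U Y n zero one f (\<lambda>i. \<phi> i (one i)) y"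
          unfolding p_plus_def using I by blast
      qed
    qed
    show "(\<forall>k\<in>{1..n}. \<forall>t\<in>X k.
         Phi_minus U Y n X zero f k t \<subseteq> \<phi> k t \<and> \<phi> k t \<subseteq> Phi_plus U Y n X one f k t)
      \<and> (\<forall>y\<in>PiE {1..n} (\<lambda>_. Y).
         p_minus U Y n zero one f (\<lambda>i. \<phi> i (zero i)) y \<subseteq> p y
         \<and> p y \<subseteq> p_plus U Y n zero one f (\<lambda>i. \<phi> i (one i)) y)"
      using A B by blast
  next
    assume C: "(\<forall>k\<in>{1..n}. \<forall>t\<in>X k.
         Phi_minus U Y n X zero f k t \<subseteq> \<phi> k t \<and> \<phi> k t \<subseteq> Phi_plus U Y n X one f k t)
      \<and> (\<forall>y\<in>PiE {1..n} (\<lambda>_. Y).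
         p_minus U Y n zero one f (\<lambda>i. \<phi> i (zero i)) y \<subseteq> p y
         \<and> p y \<subseteq> p_plus U Y n zero one f (\<lambda>i. \<phi> i (one i)) y)"
    have C1: "\<And>k t. k \<in> {1..n} \<Longrightarrow> t \<in> X k \<Longrightarrow>
         Phi_minus U Y n X zero f k t \<subseteq> \<phi> k t \<and> \<phi> k t \<subseteq> Phi_plus U Y n X one f k t"
      using C by blast
    have C2: "\<And>y. y \<in> PiE {1..n} (\<lambda>_. Y) \<Longrightarrow> p_minus U Y n zero one f (\<lambda>i. \<phi> i (zero i)) y \<subseteq> p y
         \<and> p y \<subseteq> p_plus U Y n zero one f (\<lambda>i. \<phi> i (one i)) y"
      using C by blast
    show "\<forall>x\<in>PiE {1..n} X. f x = p (restrict (\<lambda>i. \<phi> i (x i)) {1..n})"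
    proof
      fix x assume x: "x \<in> PiE {1..n} X"
      let ?y = "restrict (\<lambda>i. \<phi> i (x i)) {1..n}"
      have xi: "\<And>i. i \<in> {1..n} \<Longrightarrow> x i \<in> X i" using x by auto
      have xo: "\<And>i. i \<notin> {1..n} \<Longrightarrow> x i = undefined" using x by auto
      have S1: "f x \<subseteq> p_minus U Y n zero one f (\<lambda>i. \<phi> i (zero i)) ?y"
      proof
        fix u assume u: "u \<in> f x"
        have uU: "u \<in> U" using u f_range[OF x] YU by blast
        define I where "I = {i \<in> {1..n}. u \<in> \<phi> i (x i)}"
        have I: "I \<subseteq> {1..n}" unfolding I_def by auto
        define x' where "x' = (\<lambda>i. if i \<in> {1..n} - I then zero i else x i)"
        have x'in: "x' \<in> PiE {1..n} X"
          unfolding x'_def by (rule override_PiE[OF x]) (blast, use X in blast)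
        have ux': "u \<in> f x'"
          unfolding x'_def
        proof (rule step_chain[where P = "\<lambda>z. u \<in> f z" and xb = x and X = X and n = n])
          fix k z assume k: "k \<in> {1..n} - I" and z: "z \<in> PiE {1..n} X" and zk: "z k = x k" and uz: "u \<in> f z"
          have kn: "k \<in> {1..n}" using k by auto
          have "cl Y (f z \<inter> (U - f (z(k := zero k)))) \<subseteq> Phi_minus U Y n X zero f k (x k)"
            unfolding Phi_minus_def by (intro Union_upper CollectI exI[of _ z]) (use z zk in simp)
          then have sub: "f z \<inter> (U - f (z(k := zero k))) \<subseteq> \<phi> k (x k)"
            using cl_ext[of "f z \<inter> (U - f (z(k := zero k)))" Y] C1[OF kn xi[OF kn]] by (meson order_trans)
          have nk: "u \<notin> \<phi> k (x k)" using k unfolding I_def by simp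
          show "u \<in> f (z(k := zero k))"
          proof (rule ccontr)
            assume "u \<notin> f (z(k := zero k))"
            then have "u \<in> f z \<inter> (U - f (z(k := zero k)))" using uz uU by simp
            then show False using sub nk by blast
          qed
        qed (simp, blast, use X in blast, fact, simp, fact)
        define x'' where "x'' = (\<lambda>i. if i \<in> I then one i else x' i)"
        have ux'': "u \<in> f x''"
          unfolding x''_def
        proof (rule step_chain[where P = "\<lambda>z. u \<in> f z" and xb = x' and X = X and n = n])
          fix k z assume k: "k \<in> I" and z: "z \<in> PiE {1..n} X" and uz: "u \<in> f z"
          show "u \<in> f (z(k := one k))" using BC[of k z] k I z uz by blast
        qed (rule finite_subset[OF I], simp, fact, use X I in blast, fact, simp, fact)
        have "x'' = hat1 n zero one I"
          unfolding x''_def x'_def hat1_def using xo I by (auto intro!: ext)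
        have nz: "u \<notin> \<phi> i (zero i)" if i: "i \<in> {1..n} - I" for i
        proof -
          have "u \<notin> \<phi> i (x i)" using i unfolding I_def by simp
          moreover have "\<phi> i (zero i) \<subseteq> \<phi> i (x i)" using phi_bound[of i "x i"] xi[of i] i by simp
          ultimately show ?thesis by blast
        qed
        have "u \<in> \<Inter>{U - \<phi> i (zero i) | i. i \<in> {1..n} - I}"
        proof (rule InterI)
          fix T assume "T \<in> {U - \<phi> i (zero i) | i. i \<in> {1..n} - I}"
          then obtain i where "i \<in> {1..n} - I" "T = U - \<phi> i (zero i)" by blast
          then show "u \<in> T" using nz uU by simp
        qed
        then have "u \<in> f (hat1 n zero one I) \<inter> (U \<inter> \<Inter>{U - \<phi> i (zero i) | i. i \<in> {1..n} - I})"
          using ux'' uU \<open>x'' = hat1 n zero one I\<close> by simp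
        then have uc: "u \<in> c_minus U Y n zero one f (\<lambda>i. \<phi> i (zero i)) I"
          unfolding c_minus_def by (rule subsetD[OF cl_ext])
        have "u \<in> \<Inter>{?y i | i. i \<in> I}"
        proof (rule InterI)
          fix T assume "T \<in> {?y i | i. i \<in> I}"
          then obtain i where "i \<in> I" "T = ?y i" by blast
          then show "u \<in> T" unfolding I_def by simp
        qed
        then have uT: "u \<in> c_minus U Y n zero one f (\<lambda>i. \<phi> i (zero i)) I \<inter> (U \<inter> \<Inter>{?y i | i. i \<in> I})"
          using uU uc by (intro IntI)
        have mem: "c_minus U Y n zero one f (\<lambda>i. \<phi> i (zero i)) I \<inter> (U \<inter> \<Inter>{?y i | i. i \<in> I})
            \<in> {c_minus U Y n zero one f (\<lambda>i. \<phi> i (zero i)) I \<inter> (U \<inter> \<Inter>{?y i | i. i \<in> I}) | I. I \<subseteq> {1..n}}"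
          using I by blast
        show "u \<in> p_minus U Y n zero one f (\<lambda>i. \<phi> i (zero i)) ?y"
          unfolding p_minus_def by (rule UnionI[OF mem uT])
      qed
      have S2: "p_plus U Y n zero one f (\<lambda>i. \<phi> i (one i)) ?y \<subseteq> f x"
      proof
        fix u assume "u \<in> p_plus U Y n zero one f (\<lambda>i. \<phi> i (one i)) ?y"
        then obtain T where "T \<in> {c_plus U Y n zero one f (\<lambda>i. \<phi> i (one i)) I \<inter> (U \<inter> \<Inter>{?y i | i. i \<in> I}) | I. I \<subseteq> {1..n}}" "u \<in> T"
          unfolding p_plus_def by (rule UnionE)
        then obtain J where J: "J \<subseteq> {1..n}" and uT: "u \<in> c_plus U Y n zero one f (\<lambda>i. \<phi> i (one i)) J \<inter> (U \<inter> \<Inter>{?y i | i. i \<in> J})"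
          by blast
        have uc: "u \<in> c_plus U Y n zero one f (\<lambda>i. \<phi> i (one i)) J" and uU: "u \<in> U"
          using uT by simp_all
        have uJ: "\<forall>j\<in>J. u \<in> \<phi> j (x j)"
        proof
          fix j assume j: "j \<in> J"
          have "?y j \<in> {?y i | i. i \<in> J}" using j by blast
          then have "u \<in> ?y j" using uT by blast
          then show "u \<in> \<phi> j (x j)" using j J by auto
        qed
        have u1: "u \<in> f (hat1 n zero one J) \<union> \<Union>{U - \<phi> i (one i) | i. i \<in> J}"
          using uc unfolding c_plus_def by (rule subsetD[OF intr_sub])
        have uo: "u \<in> \<phi> j (one j)" if j: "j \<in> J" for j
        proof -
          have jn: "j \<in> {1..n}" using j J by blast
          have "\<phi> j (x j) \<subseteq> \<phi> j (one j)" using phi_bound[OF jn xi[OF jn]] by simp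
          then show ?thesis using uJ j by blast
        qed
        have "u \<notin> \<Union>{U - \<phi> i (one i) | i. i \<in> J}"
        proof
          assume "u \<in> \<Union>{U - \<phi> i (one i) | i. i \<in> J}"
          then obtain i where "i \<in> J" "u \<in> U - \<phi> i (one i)" by blast
          then show False using uo by blast
        qed
        then have uh: "u \<in> f (hat1 n zero one J)" using u1 by blast
        define z1 where "z1 = (\<lambda>i. if i \<in> J then x i else hat1 n zero one J i)"
        have z1in: "z1 \<in> PiE {1..n} X"
          unfolding z1_def by (rule override_PiE[OF hat_in]) (fact, use xi J in blast)
        have uz1: "u \<in> f z1"
          unfolding z1_def
        proof (rule step_chain[where P = "\<lambda>z. u \<in> f z" and xb = "hat1 n zero one J" and X = X and n = n])
          fix k z assume k: "k \<in> J" and z: "z \<in> PiE {1..n} X" and zk: "z k = hat1 n zero one J k"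
            and uz: "u \<in> f z"
          have kn: "k \<in> {1..n}" using k J by auto
          have zk1: "z k = one k" using zk k kn by (simp add: hat1_def)
          let ?z' = "z(k := x k)"
          have z'in: "?z' \<in> PiE {1..n} X" using upd_in[OF z kn xi[OF kn]] .
          have z'1: "?z'(k := one k) = z" using zk1 by (metis fun_upd_triv fun_upd_upd)
          have "Phi_plus U Y n X one f k (x k) \<subseteq> intr Y (f ?z' \<union> (U - f (?z'(k := one k))))"
            unfolding Phi_plus_def
            by (rule order_trans[OF Int_lower2], intro Inter_lower CollectI exI[of _ ?z']) (use z'in in simp)
          also have "\<dots> \<subseteq> f ?z' \<union> (U - f (?z'(k := one k)))" by (rule intr_sub)
          also have "\<dots> = f ?z' \<union> (U - f z)" using z'1 by simp
          finally have "Phi_plus U Y n X one f k (x k) \<subseteq> f ?z' \<union> (U - f z)" .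
          then have "\<phi> k (x k) \<subseteq> f ?z' \<union> (U - f z)"
            using C1[OF kn xi[OF kn]] by (meson order_trans)
          moreover have "u \<in> \<phi> k (x k)" using uJ k by blast
          ultimately show "u \<in> f ?z'" using uz by blast
        qed (rule finite_subset[OF J], simp, fact, use xi J in blast, rule hat_in, simp, fact)
        define z2 where "z2 = (\<lambda>i. if i \<in> {1..n} - J then x i else z1 i)"
        have uz2: "u \<in> f z2"
          unfolding z2_def
        proof (rule step_chain[where P = "\<lambda>z. u \<in> f z" and xb = z1 and X = X and n = n])
          fix k z assume k: "k \<in> {1..n} - J" and z: "z \<in> PiE {1..n} X" and zk: "z k = z1 k"
            and uz: "u \<in> f z"
          have kn: "k \<in> {1..n}" using k by auto
          have zk0: "z k = zero k" using zk k by (simp add: z1_def hat1_def)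
          have z'in: "z(k := x k) \<in> PiE {1..n} X" using upd_in[OF z kn xi[OF kn]] .
          have "(z(k := x k))(k := zero k) = z" using zk0 by auto
          then show "u \<in> f (z(k := x k))" using BC[OF kn z'in] uz by auto
        qed (simp, blast, use xi in blast, fact, simp, fact)
        have "z2 = x" unfolding z2_def z1_def hat1_def using xo by (auto intro!: ext)
        then show "u \<in> f x" using uz2 by simp
      qed
      have yin: "?y \<in> PiE {1..n} (\<lambda>_. Y)" using phx_in[OF x] .
      show "f x = p ?y" using S1 S2 C2[OF yin] by blast
    qed
  qed
qed
end
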